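(* Let $\alpha,\beta,\gamma$ be partitions with $\alpha_1\le 2$ such that $\beta'_i\le\gamma'_i+1$ for all $i\ge 1$ (i.e. $\beta\setminus\gamma$ is a vertical strip). Then in the poset $(\mathcal D_{\alpha,\gamma}^\beta,\le_{\rm arc})$ all saturated chains have the same length.
   Context: For a partition $\lambda$, $\lambda'$ denotes the conjugate partition. Let $\alpha_1\le 2$, so $\alpha'=(\alpha'_1,\alpha'_2)$. Place the positive integers on a horizontal line in decreasing order from left to right. An arc is a pair $(m,n)$ of positive integers with $m>n$ (source $m$, target $n$), drawn as an upper semicircle joining $m$ and $n$; a pole at $n$ is a vertical half-line starting at $n$, regarded as an arc $(\infty,n)$ with source $\infty$ (larger than every integer). An arc diagram of type $(\alpha,\beta,\gamma)$ is a finite multiset of $\alpha'_2$ arcs and $\alpha'_1-\alpha'_2$ poles such that for each $i\ge1$ the number of arcs and poles having $i$ as source or target equals $\beta'_i-\gamma'_i$. $\mathcal D_{\alpha,\gamma}^\beta$ is the set of these. Two members $(m,n),(k,r)$ (arcs or poles) cross iff $r<n<k<m$ or $n<r<m<k$; $x(\Delta)$ is the number of crossing pairs of members of $\Delta$ (counted with multiplicity). Moves: for $a>b>c>d$, (A) replaces arcs $(a,c),(b,d)$ by $(a,d),(b,c)$; (C) replaces arcs $(a,c),(b,d)$ by $(a,b),(c,d)$; for $a>b>c$, (B) replaces arc $(a,c)$ and pole $(\infty,b)$ by arc $(a,b)$ and pole $(\infty,c)$; (D) replaces arc $(a,c)$ and pole $(\infty,b)$ by arc $(b,c)$ and pole $(\infty,a)$;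 all other members stay unchanged. $\Delta\le_{\rm arc}\Delta'$ iff $\Delta$ is obtained from $\Delta'$ by a finite (possibly empty) sequence of such moves. A chain in a poset is saturated if it has no refinement, i.e. it is not properly contained in any other chain of the poset. *)

theory Defs
  imports Main "HOL-Library.Multiset" "HOL-Library.Extended_Nat"
begin

definition is_partition :: "nat list \<Rightarrow> bool" where
  "is_partition lam \<longleftrightarrow> sorted_wrt (\<ge>) lam \<and> 0 \<notin> set lam"

text \<open>Conjugate partition: conj_part lam i = lambda'_i = number of parts \<ge> i (for i \<ge> 1).\<close>
definition conj_part :: "nat list \<Rightarrow> nat \<Rightarrow> nat" where
  "conj_part lam i = length (filter (\<lambda>x. i \<le> x) lam)"

text \<open>A member (arc or pole) is a pair (source, target); source \<infinity> means a pole.\<close>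
type_synonym member = "enat \<times> nat"
type_synonym diagram = "member multiset"

definition arc_diagrams :: "nat list \<Rightarrow> nat list \<Rightarrow> nat list \<Rightarrow> diagram set" where
  "arc_diagrams alpha beta gamma =
     {D. (\<forall>x\<in>#D. 1 \<le> snd x \<and> enat (snd x) < fst x)
       \<and> size (filter_mset (\<lambda>x. fst x \<noteq> \<infinity>) D) = conj_part alpha 2
       \<and> int (size (filter_mset (\<lambda>x. fst x = \<infinity>) D)) = int (conj_part alpha 1) - int (conj_part alpha 2)
       \<and> (\<forall>i\<ge>1. int (size (filter_mset (\<lambda>x. fst x = enat i \<or> snd x = i) D))
                  = int (conj_part beta i) - int (conj_part gamma i))}"

definition arc_move :: "diagram \<Rightarrow> diagram \<Rightarrow> bool" where
  "arc_move D' D \<longleftrightarrow>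
    (\<exists>a b c d :: nat. a > b \<and> b > c \<and> c > d \<and>
        {#(enat a, c), (enat b, d)#} \<subseteq># D' \<and>
        (D = D' - {#(enat a, c), (enat b, d)#} + {#(enat a, d), (enat b, c)#} \<or>
         D = D' - {#(enat a, c), (enat b, d)#} + {#(enat a, b), (enat c, d)#}))
  \<or> (\<exists>a b c :: nat. a > b \<and> b > c \<and>
        {#(enat a, c), (\<infinity>, b)#} \<subseteq># D' \<and>
        (D = D' - {#(enat a, c), (\<infinity>, b)#} + {#(enat a, b), (\<infinity>, c)#} \<or>
         D = D' - {#(enat a, c), (\<infinity>, b)#} + {#(enat b, c), (\<infinity>, a)#}))"

definition arc_le :: "diagram \<Rightarrow> diagram \<Rightarrow> bool" where
  "arc_le D D' \<longleftrightarrow> arc_move\<^sup>*\<^sup>* D' D"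

definition is_chain_in :: "diagram set \<Rightarrow> diagram set \<Rightarrow> bool" where
  "is_chain_in P C \<longleftrightarrow> C \<subseteq> P \<and> (\<forall>x\<in>C. \<forall>y\<in>C. arc_le x y \<or> arc_le y x)"

definition saturated_chain_in :: "diagram set \<Rightarrow> diagram set \<Rightarrow> bool" where
  "saturated_chain_in P C \<longleftrightarrow> is_chain_in P C \<and> \<not> (\<exists>C'. is_chain_in P C' \<and> C \<subset> C')"

end

theory Submission
  imports Defs
begin

definition cr :: "member \<Rightarrow> member \<Rightarrow> bool" where
  "cr u v \<longleftrightarrow> (snd v < snd u \<and> enat (snd u) < fst v \<and> fst v < fst u)
             \<or> (snd u < snd v \<and> enat (snd v) < fst u \<and> fst u < fst v)"

lemma cr_ee[simp]: "cr (enat m, n) (enat k, r) \<longleftrightarrow> (r < n \<and> n < k \<and> k < m) \<or> (n < r \<and> r < m \<and> m < k)"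
  by (simp add: cr_def)
lemma cr_ei[simp]: "cr (enat m, n) (\<infinity>, r) \<longleftrightarrow> (n < r \<and> r < m)"
  by (auto simp add: cr_def)
lemma cr_ie[simp]: "cr (\<infinity>, n) (enat k, r) \<longleftrightarrow> (r < n \<and> n < k)"
  by (auto simp add: cr_def)
lemma cr_ii[simp]: "\<not> cr (\<infinity>, n) (\<infinity>, r)"
  by (auto simp add: cr_def)
lemma cr_sym: "cr u v = cr v u"
  unfolding cr_def by blast
lemma cr_irrefl[simp]: "\<not> cr u u"
  by (auto simp add: cr_def)

definition cnt :: "member \<Rightarrow> diagram \<Rightarrow> nat" where
  "cnt u D = size (filter_mset (cr u) D)"

definition XX :: "diagram \<Rightarrow> nat" where
  "XX D = (\<Sum>u\<in>#D. cnt u D)"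

definition rk :: "diagram \<Rightarrow> nat" where
  "rk D = XX D div 2"

lemma cnt_union[simp]: "cnt u (A + B) = cnt u A + cnt u B"
  by (simp add: cnt_def)
lemma cnt_empty[simp]: "cnt u {#} = 0"
  by (simp add: cnt_def)
lemma cnt_add_mset[simp]: "cnt u (add_mset v A) = (if cr u v then 1 else 0) + cnt u A"
  by (simp add: cnt_def)

lemma cnt_pair: "cnt u {#x, y#} = (if cr u x then 1 else 0) + (if cr u y then 1 else 0)"
  by (simp add: cnt_def)

lemma size_filter_sum: "size (filter_mset P B) = (\<Sum>u\<in>#B. if P u then 1 else 0)"
  by (induction B) auto

lemma cnt_swap: "(\<Sum>u\<in>#A. cnt u B) = (\<Sum>u\<in>#B. cnt u A)"
proof (induction A)
  case empty
  then show ?case by simp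
next
  case (add x A)
  have "(\<Sum>u\<in>#B. cnt u (add_mset x A)) = (\<Sum>u\<in>#B. (if cr u x then 1 else 0) + cnt u A)"
    by simp
  also have "\<dots> = (\<Sum>u\<in>#B. (if cr u x then 1 else 0)) + (\<Sum>u\<in>#B. cnt u A)"
    by (simp add: sum_mset.distrib)
  also have "(\<Sum>u\<in>#B. (if cr u x then 1 else 0)) = cnt x B"
    unfolding cnt_def size_filter_sum by (simp add: cr_sym)
  finally show ?case using add by simp
qed

lemma XX_union: "XX (A + B) = XX A + XX B + 2 * (\<Sum>u\<in>#A. cnt u B)"
proof -
  have "XX (A + B) = (\<Sum>u\<in>#A. cnt u A + cnt u B) + (\<Sum>u\<in>#B. cnt u A + cnt u B)"
    unfolding XX_def by simp
  also have "\<dots> = XX A + (\<Sum>u\<in>#A. cnt u B) + (\<Sum>u\<in>#B. cnt u A) + XX B"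
    unfolding XX_def by (simp add: sum_mset.distrib)
  finally show ?thesis using cnt_swap[of A B] by simp
qed

lemma XX_pair: "XX {#u, v#} = (if cr u v then 2 else 0)"
  unfolding XX_def by (simp add: cr_sym)

lemma step_gen:
  assumes "XX M = 2" "XX N = 0"
    and H: "\<And>f. f \<in># R \<Longrightarrow> cnt f N \<le> cnt f M \<and> (cnt f N < cnt f M \<longrightarrow> (\<exists>z. arc_move (R+M) z \<and> arc_move\<^sup>+\<^sup>+ z (R+N)))"
  shows "rk (R+N) < rk (R+M) \<and> (rk (R+N) + 2 \<le> rk (R+M) \<longrightarrow> (\<exists>z. arc_move (R+M) z \<and> arc_move\<^sup>+\<^sup>+ z (R+N)))"
proof -
  define sM where "sM = (\<Sum>u\<in>#R. cnt u M)"
  define sN where "sN = (\<Sum>u\<in>#R. cnt u N)"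
  have le: "sN \<le> sM" unfolding sM_def sN_def by (rule sum_mset_mono) (use H in blast)
  have "XX (R+M) = XX R + 2 + 2 * sM" using XX_union[of R M] assms unfolding sM_def by simp
  moreover have "XX (R+N) = XX R + 2 * sN" using XX_union[of R N] assms unfolding sN_def by simp
  ultimately have eq: "rk (R+M) = rk (R+N) + 1 + (sM - sN)" unfolding rk_def using le by simp
  show ?thesis
  proof (intro conjI impI)
    show "rk (R+N) < rk (R+M)" using eq by simp
    assume "rk (R+N) + 2 \<le> rk (R+M)"
    then have "sN < sM" using eq by simp
    then have "\<exists>f\<in>#R. cnt f N < cnt f M"
    proof -
      assume lt: "sN < sM"
      show ?thesis
      proof (rule ccontr)
        assume "\<not> (\<exists>f\<in>#R. cnt f N < cnt f M)"
        then have "\<And>f. f \<in># R \<Longrightarrow> cnt f N = cnt f M" using H by (meson le_neq_implies_less)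
        then have "sN = sM" unfolding sN_def sM_def by (metis (mono_tags, lifting) image_mset_cong)
        with lt show False by simp
      qed
    qed
    then show "\<exists>z. arc_move (R+M) z \<and> arc_move\<^sup>+\<^sup>+ z (R+N)" using H by blast
  qed
qed

definition simple :: "diagram \<Rightarrow> bool" where
  "simple D \<longleftrightarrow> (\<forall>i. size (filter_mset (\<lambda>x. fst x = enat i \<or> snd x = i) D) \<le> 1)"

lemma pair_sub: "f \<in># R \<Longrightarrow> x \<in># M \<Longrightarrow> {#f#} + {#x#} \<subseteq># R + M"
proof -
  assume "f \<in># R" "x \<in># M"
  then have "{#f#} \<subseteq># R" "{#x#} \<subseteq># M" by auto
  then show "{#f#} + {#x#} \<subseteq># R + M" by (rule subset_mset.add_mono)
qed

lemma simple_pair: "simple D \<Longrightarrow> ({#f#} + {#x#}) \<subseteq># D \<Longrightarrow> (fst f = enat i \<or> snd f = i) \<Longrightarrow> (fst x = enat i \<or> snd x = i) \<Longrightarrow> False"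
proof -
  assume a: "simple D" "({#f#} + {#x#}) \<subseteq># D" "fst f = enat i \<or> snd f = i" "fst x = enat i \<or> snd x = i"
  have "filter_mset (\<lambda>x. fst x = enat i \<or> snd x = i) ({#f#} + {#x#}) \<subseteq># filter_mset (\<lambda>x. fst x = enat i \<or> snd x = i) D"
    using a(2) by (rule multiset_filter_mono)
  then have "size (filter_mset (\<lambda>x. fst x = enat i \<or> snd x = i) ({#f#} + {#x#})) \<le> size (filter_mset (\<lambda>x. fst x = enat i \<or> snd x = i) D)"
    by (rule size_mset_mono)
  moreover have "size (filter_mset (\<lambda>x. fst x = enat i \<or> snd x = i) ({#f#} + {#x#})) = 2" using a(3,4) by simp
  moreover have "size (filter_mset (\<lambda>x. fst x = enat i \<or> snd x = i) D) \<le> 1" using a(1) unfolding simple_def by blast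
  ultimately show False by linarith
qed

lemma disj_pt: assumes "simple (R + M)" "f \<in># R" "x \<in># M" "fst x = enat i \<or> snd x = i"
  shows "fst f \<noteq> enat i \<and> snd f \<noteq> i"
  using simple_pair[OF assms(1) pair_sub[OF assms(2,3)] _ assms(4)] by blast

lemma mvA: "a > b \<Longrightarrow> b > c \<Longrightarrow> c > d \<Longrightarrow> S = Q + {#(enat a, c), (enat b, d)#} \<Longrightarrow>
   T = Q + {#(enat a, d), (enat b, c)#} \<Longrightarrow> arc_move S T"
  unfolding arc_move_def
  apply (rule disjI1)
  apply (rule exI[of _ a], rule exI[of _ b], rule exI[of _ c], rule exI[of _ d])
  by simp

lemma mvC: "a > b \<Longrightarrow> b > c \<Longrightarrow> c > d \<Longrightarrow> S = Q + {#(enat a, c), (enat b, d)#} \<Longrightarrow>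
   T = Q + {#(enat a, b), (enat c, d)#} \<Longrightarrow> arc_move S T"
  unfolding arc_move_def
  apply (rule disjI1)
  apply (rule exI[of _ a], rule exI[of _ b], rule exI[of _ c], rule exI[of _ d])
  by simp

lemma mvB: "a > b \<Longrightarrow> b > c \<Longrightarrow> S = Q + {#(enat a, c), (\<infinity>, b)#} \<Longrightarrow>
   T = Q + {#(enat a, b), (\<infinity>, c)#} \<Longrightarrow> arc_move S T"
  unfolding arc_move_def
  apply (rule disjI2)
  apply (rule exI[of _ a], rule exI[of _ b], rule exI[of _ c])
  by simp

lemma mvD: "a > b \<Longrightarrow> b > c \<Longrightarrow> S = Q + {#(enat a, c), (\<infinity>, b)#} \<Longrightarrow>
   T = Q + {#(enat b, c), (\<infinity>, a)#} \<Longrightarrow> arc_move S T"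
  unfolding arc_move_def
  apply (rule disjI2)
  apply (rule exI[of _ a], rule exI[of _ b], rule exI[of _ c])
  by simp

lemma facA:
  assumes "a > e" "e > b" "b > c" "c > g" "g > d"
  shows "\<exists>z. arc_move (add_mset (enat e, g) Q + {#(enat a, c), (enat b, d)#}) z \<and> arc_move\<^sup>+\<^sup>+ z (add_mset (enat e, g) Q + {#(enat a, d), (enat b, c)#})"
proof -
  have s0: "arc_move (add_mset (enat e, g) Q + {#(enat a, c), (enat b, d)#}) (add_mset (enat a, c) (add_mset (enat e, d) (add_mset (enat b, g) Q)))"
    by (rule mvA[where a=e and b=b and c=g and d=d and Q="add_mset (enat a, c) Q"]) (use assms in \<open>simp_all add: add_mset_commute\<close>)
  have s1: "arc_move (add_mset (enat a, c) (add_mset (enat e, d) (add_mset (enat b, g) Q))) (add_mset (enat e, d) (add_mset (enat a, g) (add_mset (enat b, c) Q)))"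
    by (rule mvA[where a=a and b=b and c=c and d=g and Q="add_mset (enat e, d) Q"]) (use assms in \<open>simp_all add: add_mset_commute\<close>)
  have s2: "arc_move (add_mset (enat e, d) (add_mset (enat a, g) (add_mset (enat b, c) Q))) (add_mset (enat e, g) Q + {#(enat a, d), (enat b, c)#})"
    by (rule mvA[where a=a and b=e and c=g and d=d and Q="add_mset (enat b, c) Q"]) (use assms in \<open>simp_all add: add_mset_commute\<close>)
  have "arc_move\<^sup>+\<^sup>+ (add_mset (enat a, c) (add_mset (enat e, d) (add_mset (enat b, g) Q))) (add_mset (enat e, d) (add_mset (enat a, g) (add_mset (enat b, c) Q)))" using s1 by (rule tranclp.r_into_trancl)
  then have "arc_move\<^sup>+\<^sup>+ (add_mset (enat a, c) (add_mset (enat e, d) (add_mset (enat b, g) Q))) (add_mset (enat e, g) Q + {#(enat a, d), (enat b, c)#})" using s2 by (rule tranclp.trancl_into_trancl)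
  with s0 show ?thesis by blast
qed

lemma facC1:
  assumes "a > b" "b > e" "e > c" "c > d" "d > g"
  shows "\<exists>z. arc_move (add_mset (enat e, g) Q + {#(enat a, c), (enat b, d)#}) z \<and> arc_move\<^sup>+\<^sup>+ z (add_mset (enat e, g) Q + {#(enat a, b), (enat c, d)#})"
proof -
  have s0: "arc_move (add_mset (enat e, g) Q + {#(enat a, c), (enat b, d)#}) (add_mset (enat a, c) (add_mset (enat b, g) (add_mset (enat e, d) Q)))"
    by (rule mvA[where a=b and b=e and c=d and d=g and Q="add_mset (enat a, c) Q"]) (use assms in \<open>simp_all add: add_mset_commute\<close>)
  have s1: "arc_move (add_mset (enat a, c) (add_mset (enat b, g) (add_mset (enat e, d) Q))) (add_mset (enat b, g) (add_mset (enat a, e) (add_mset (enat c, d) Q)))"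
    by (rule mvC[where a=a and b=e and c=c and d=d and Q="add_mset (enat b, g) Q"]) (use assms in \<open>simp_all add: add_mset_commute\<close>)
  have s2: "arc_move (add_mset (enat b, g) (add_mset (enat a, e) (add_mset (enat c, d) Q))) (add_mset (enat e, g) Q + {#(enat a, b), (enat c, d)#})"
    by (rule mvC[where a=a and b=b and c=e and d=g and Q="add_mset (enat c, d) Q"]) (use assms in \<open>simp_all add: add_mset_commute\<close>)
  have "arc_move\<^sup>+\<^sup>+ (add_mset (enat a, c) (add_mset (enat b, g) (add_mset (enat e, d) Q))) (add_mset (enat b, g) (add_mset (enat a, e) (add_mset (enat c, d) Q)))" using s1 by (rule tranclp.r_into_trancl)
  then have "arc_move\<^sup>+\<^sup>+ (add_mset (enat a, c) (add_mset (enat b, g) (add_mset (enat e, d) Q))) (add_mset (enat e, g) Q + {#(enat a, b), (enat c, d)#})" using s2 by (rule tranclp.trancl_into_trancl)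
  with s0 show ?thesis by blast
qed

lemma facC2:
  assumes "e > a" "a > b" "b > g" "g > c" "c > d"
  shows "\<exists>z. arc_move (add_mset (enat e, g) Q + {#(enat a, c), (enat b, d)#}) z \<and> arc_move\<^sup>+\<^sup>+ z (add_mset (enat e, g) Q + {#(enat a, b), (enat c, d)#})"
proof -
  have s0: "arc_move (add_mset (enat e, g) Q + {#(enat a, c), (enat b, d)#}) (add_mset (enat a, c) (add_mset (enat e, b) (add_mset (enat g, d) Q)))"
    by (rule mvC[where a=e and b=b and c=g and d=d and Q="add_mset (enat a, c) Q"]) (use assms in \<open>simp_all add: add_mset_commute\<close>)
  have s1: "arc_move (add_mset (enat a, c) (add_mset (enat e, b) (add_mset (enat g, d) Q))) (add_mset (enat e, b) (add_mset (enat a, g) (add_mset (enat c, d) Q)))"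
    by (rule mvC[where a=a and b=g and c=c and d=d and Q="add_mset (enat e, b) Q"]) (use assms in \<open>simp_all add: add_mset_commute\<close>)
  have s2: "arc_move (add_mset (enat e, b) (add_mset (enat a, g) (add_mset (enat c, d) Q))) (add_mset (enat e, g) Q + {#(enat a, b), (enat c, d)#})"
    by (rule mvA[where a=e and b=a and c=b and d=g and Q="add_mset (enat c, d) Q"]) (use assms in \<open>simp_all add: add_mset_commute\<close>)
  have "arc_move\<^sup>+\<^sup>+ (add_mset (enat a, c) (add_mset (enat e, b) (add_mset (enat g, d) Q))) (add_mset (enat e, b) (add_mset (enat a, g) (add_mset (enat c, d) Q)))" using s1 by (rule tranclp.r_into_trancl)
  then have "arc_move\<^sup>+\<^sup>+ (add_mset (enat a, c) (add_mset (enat e, b) (add_mset (enat g, d) Q))) (add_mset (enat e, g) Q + {#(enat a, b), (enat c, d)#})" using s2 by (rule tranclp.trancl_into_trancl)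
  with s0 show ?thesis by blast
qed

lemma facC3:
  assumes "a > b" "b > g" "g > c" "c > d"
  shows "\<exists>z. arc_move (add_mset (\<infinity>, g) Q + {#(enat a, c), (enat b, d)#}) z \<and> arc_move\<^sup>+\<^sup>+ z (add_mset (\<infinity>, g) Q + {#(enat a, b), (enat c, d)#})"
proof -
  have s0: "arc_move (add_mset (\<infinity>, g) Q + {#(enat a, c), (enat b, d)#}) (add_mset (enat a, c) (add_mset (enat g, d) (add_mset (\<infinity>, b) Q)))"
    by (rule mvD[where a=b and b=g and c=d and Q="add_mset (enat a, c) Q"]) (use assms in \<open>simp_all add: add_mset_commute\<close>)
  have s1: "arc_move (add_mset (enat a, c) (add_mset (enat g, d) (add_mset (\<infinity>, b) Q))) (add_mset (\<infinity>, b) (add_mset (enat a, g) (add_mset (enat c, d) Q)))"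
    by (rule mvC[where a=a and b=g and c=c and d=d and Q="add_mset (\<infinity>, b) Q"]) (use assms in \<open>simp_all add: add_mset_commute\<close>)
  have s2: "arc_move (add_mset (\<infinity>, b) (add_mset (enat a, g) (add_mset (enat c, d) Q))) (add_mset (\<infinity>, g) Q + {#(enat a, b), (enat c, d)#})"
    by (rule mvB[where a=a and b=b and c=g and Q="add_mset (enat c, d) Q"]) (use assms in \<open>simp_all add: add_mset_commute\<close>)
  have "arc_move\<^sup>+\<^sup>+ (add_mset (enat a, c) (add_mset (enat g, d) (add_mset (\<infinity>, b) Q))) (add_mset (\<infinity>, b) (add_mset (enat a, g) (add_mset (enat c, d) Q)))" using s1 by (rule tranclp.r_into_trancl)
  then have "arc_move\<^sup>+\<^sup>+ (add_mset (enat a, c) (add_mset (enat g, d) (add_mset (\<infinity>, b) Q))) (add_mset (\<infinity>, g) Q + {#(enat a, b), (enat c, d)#})" using s2 by (rule tranclp.trancl_into_trancl)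
  with s0 show ?thesis by blast
qed

lemma facB1:
  assumes "e > a" "a > b" "b > g" "g > c"
  shows "\<exists>z. arc_move (add_mset (enat e, g) Q + {#(enat a, c), (\<infinity>, b)#}) z \<and> arc_move\<^sup>+\<^sup>+ z (add_mset (enat e, g) Q + {#(enat a, b), (\<infinity>, c)#})"
proof -
  have s0: "arc_move (add_mset (enat e, g) Q + {#(enat a, c), (\<infinity>, b)#}) (add_mset (\<infinity>, b) (add_mset (enat e, c) (add_mset (enat a, g) Q)))"
    by (rule mvA[where a=e and b=a and c=g and d=c and Q="add_mset (\<infinity>, b) Q"]) (use assms in \<open>simp_all add: add_mset_commute\<close>)
  have s1: "arc_move (add_mset (\<infinity>, b) (add_mset (enat e, c) (add_mset (enat a, g) Q))) (add_mset (enat e, c) (add_mset (enat a, b) (add_mset (\<infinity>, g) Q)))"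
    by (rule mvB[where a=a and b=b and c=g and Q="add_mset (enat e, c) Q"]) (use assms in \<open>simp_all add: add_mset_commute\<close>)
  have s2: "arc_move (add_mset (enat e, c) (add_mset (enat a, b) (add_mset (\<infinity>, g) Q))) (add_mset (enat e, g) Q + {#(enat a, b), (\<infinity>, c)#})"
    by (rule mvB[where a=e and b=g and c=c and Q="add_mset (enat a, b) Q"]) (use assms in \<open>simp_all add: add_mset_commute\<close>)
  have "arc_move\<^sup>+\<^sup>+ (add_mset (\<infinity>, b) (add_mset (enat e, c) (add_mset (enat a, g) Q))) (add_mset (enat e, c) (add_mset (enat a, b) (add_mset (\<infinity>, g) Q)))" using s1 by (rule tranclp.r_into_trancl)
  then have "arc_move\<^sup>+\<^sup>+ (add_mset (\<infinity>, b) (add_mset (enat e, c) (add_mset (enat a, g) Q))) (add_mset (enat e, g) Q + {#(enat a, b), (\<infinity>, c)#})" using s2 by (rule tranclp.trancl_into_trancl)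
  with s0 show ?thesis by blast
qed

lemma facB2:
  assumes "a > b" "b > g" "g > c"
  shows "\<exists>z. arc_move (add_mset (\<infinity>, g) Q + {#(enat a, c), (\<infinity>, b)#}) z \<and> arc_move\<^sup>+\<^sup>+ z (add_mset (\<infinity>, g) Q + {#(enat a, b), (\<infinity>, c)#})"
proof -
  have s0: "arc_move (add_mset (\<infinity>, g) Q + {#(enat a, c), (\<infinity>, b)#}) (add_mset (\<infinity>, b) (add_mset (enat a, g) (add_mset (\<infinity>, c) Q)))"
    by (rule mvB[where a=a and b=g and c=c and Q="add_mset (\<infinity>, b) Q"]) (use assms in \<open>simp_all add: add_mset_commute\<close>)
  have s1: "arc_move (add_mset (\<infinity>, b) (add_mset (enat a, g) (add_mset (\<infinity>, c) Q))) (add_mset (\<infinity>, g) Q + {#(enat a, b), (\<infinity>, c)#})"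
    by (rule mvB[where a=a and b=b and c=g and Q="add_mset (\<infinity>, c) Q"]) (use assms in \<open>simp_all add: add_mset_commute\<close>)
  have "arc_move\<^sup>+\<^sup>+ (add_mset (\<infinity>, b) (add_mset (enat a, g) (add_mset (\<infinity>, c) Q))) (add_mset (\<infinity>, g) Q + {#(enat a, b), (\<infinity>, c)#})" using s1 by (rule tranclp.r_into_trancl)
  with s0 show ?thesis by blast
qed

lemma facD1:
  assumes "a > e" "e > b" "b > c" "c > g"
  shows "\<exists>z. arc_move (add_mset (enat e, g) Q + {#(enat a, c), (\<infinity>, b)#}) z \<and> arc_move\<^sup>+\<^sup>+ z (add_mset (enat e, g) Q + {#(enat b, c), (\<infinity>, a)#})"
proof -
  have s0: "arc_move (add_mset (enat e, g) Q + {#(enat a, c), (\<infinity>, b)#}) (add_mset (enat a, c) (add_mset (enat b, g) (add_mset (\<infinity>, e) Q)))"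
    by (rule mvD[where a=e and b=b and c=g and Q="add_mset (enat a, c) Q"]) (use assms in \<open>simp_all add: add_mset_commute\<close>)
  have s1: "arc_move (add_mset (enat a, c) (add_mset (enat b, g) (add_mset (\<infinity>, e) Q))) (add_mset (\<infinity>, e) (add_mset (enat a, g) (add_mset (enat b, c) Q)))"
    by (rule mvA[where a=a and b=b and c=c and d=g and Q="add_mset (\<infinity>, e) Q"]) (use assms in \<open>simp_all add: add_mset_commute\<close>)
  have s2: "arc_move (add_mset (\<infinity>, e) (add_mset (enat a, g) (add_mset (enat b, c) Q))) (add_mset (enat e, g) Q + {#(enat b, c), (\<infinity>, a)#})"
    by (rule mvD[where a=a and b=e and c=g and Q="add_mset (enat b, c) Q"]) (use assms in \<open>simp_all add: add_mset_commute\<close>)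
  have "arc_move\<^sup>+\<^sup>+ (add_mset (enat a, c) (add_mset (enat b, g) (add_mset (\<infinity>, e) Q))) (add_mset (\<infinity>, e) (add_mset (enat a, g) (add_mset (enat b, c) Q)))" using s1 by (rule tranclp.r_into_trancl)
  then have "arc_move\<^sup>+\<^sup>+ (add_mset (enat a, c) (add_mset (enat b, g) (add_mset (\<infinity>, e) Q))) (add_mset (enat e, g) Q + {#(enat b, c), (\<infinity>, a)#})" using s2 by (rule tranclp.trancl_into_trancl)
  with s0 show ?thesis by blast
qed

lemma facD2:
  assumes "a > g" "g > b" "b > c"
  shows "\<exists>z. arc_move (add_mset (\<infinity>, g) Q + {#(enat a, c), (\<infinity>, b)#}) z \<and> arc_move\<^sup>+\<^sup>+ z (add_mset (\<infinity>, g) Q + {#(enat b, c), (\<infinity>, a)#})"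
proof -
  have s0: "arc_move (add_mset (\<infinity>, g) Q + {#(enat a, c), (\<infinity>, b)#}) (add_mset (\<infinity>, b) (add_mset (enat g, c) (add_mset (\<infinity>, a) Q)))"
    by (rule mvD[where a=a and b=g and c=c and Q="add_mset (\<infinity>, b) Q"]) (use assms in \<open>simp_all add: add_mset_commute\<close>)
  have s1: "arc_move (add_mset (\<infinity>, b) (add_mset (enat g, c) (add_mset (\<infinity>, a) Q))) (add_mset (\<infinity>, g) Q + {#(enat b, c), (\<infinity>, a)#})"
    by (rule mvD[where a=g and b=b and c=c and Q="add_mset (\<infinity>, a) Q"]) (use assms in \<open>simp_all add: add_mset_commute\<close>)
  have "arc_move\<^sup>+\<^sup>+ (add_mset (\<infinity>, b) (add_mset (enat g, c) (add_mset (\<infinity>, a) Q))) (add_mset (\<infinity>, g) Q + {#(enat b, c), (\<infinity>, a)#})" using s1 by (rule tranclp.r_into_trancl)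
  with s0 show ?thesis by blast
qed

lemma pos4: "(x::nat) \<noteq> a \<Longrightarrow> x \<noteq> b \<Longrightarrow> x \<noteq> c \<Longrightarrow> x \<noteq> d \<Longrightarrow> a > b \<Longrightarrow> b > c \<Longrightarrow> c > d \<Longrightarrow>
  x < d \<or> (d < x \<and> x < c) \<or> (c < x \<and> x < b) \<or> (b < x \<and> x < a) \<or> a < x"
  by linarith

lemma pos3: "(x::nat) \<noteq> a \<Longrightarrow> x \<noteq> b \<Longrightarrow> x \<noteq> c \<Longrightarrow> a > b \<Longrightarrow> b > c \<Longrightarrow>
  x < c \<or> (c < x \<and> x < b) \<or> (b < x \<and> x < a) \<or> a < x"
  by linarith

lemma locA_e:
  assumes o: "a > b" "b > c" "c > d" and n: "e \<noteq> a" "e \<noteq> b" "e \<noteq> c" "e \<noteq> d" "g \<noteq> a" "g \<noteq> b" "g \<noteq> c" "g \<noteq> d" "g < e"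
  shows "cnt (enat e, g) {#(enat a, d), (enat b, c)#} \<le> cnt (enat e, g) {#(enat a, c), (enat b, d)#} \<and> (cnt (enat e, g) {#(enat a, d), (enat b, c)#} < cnt (enat e, g) {#(enat a, c), (enat b, d)#} \<longrightarrow> (b < e \<and> e < a \<and> d < g \<and> g < c))"
proof -
  have pg: "g < d \<or> (d < g \<and> g < c) \<or> (c < g \<and> g < b) \<or> (b < g \<and> g < a) \<or> a < g" using o n by (intro pos4) auto
  have pe: "e < d \<or> (d < e \<and> e < c) \<or> (c < e \<and> e < b) \<or> (b < e \<and> e < a) \<or> a < e" using o n by (intro pos4) auto
  show ?thesis
    using pg pe o n(9) unfolding cnt_pair
    apply -
    apply (elim disjE conjE)
    apply simp_all
    done
qed

lemma locA_i:
  assumes o: "a > b" "b > c" "c > d" and n: "g \<noteq> a" "g \<noteq> b" "g \<noteq> c" "g \<noteq> d"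
  shows "cnt (\<infinity>, g) {#(enat a, d), (enat b, c)#} \<le> cnt (\<infinity>, g) {#(enat a, c), (enat b, d)#} \<and> (cnt (\<infinity>, g) {#(enat a, d), (enat b, c)#} < cnt (\<infinity>, g) {#(enat a, c), (enat b, d)#} \<longrightarrow> (False))"
proof -
  have pg: "g < d \<or> (d < g \<and> g < c) \<or> (c < g \<and> g < b) \<or> (b < g \<and> g < a) \<or> a < g" using o n by (intro pos4) auto
  show ?thesis
    using pg  o n(4) unfolding cnt_pair
    apply -
    apply (elim disjE conjE)
    apply simp_all
    done
qed

lemma locC_e:
  assumes o: "a > b" "b > c" "c > d" and n: "e \<noteq> a" "e \<noteq> b" "e \<noteq> c" "e \<noteq> d" "g \<noteq> a" "g \<noteq> b" "g \<noteq> c" "g \<noteq> d" "g < e"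
  shows "cnt (enat e, g) {#(enat a, b), (enat c, d)#} \<le> cnt (enat e, g) {#(enat a, c), (enat b, d)#} \<and> (cnt (enat e, g) {#(enat a, b), (enat c, d)#} < cnt (enat e, g) {#(enat a, c), (enat b, d)#} \<longrightarrow> ((c < e \<and> e < b \<and> g < d) \<or> (a < e \<and> c < g \<and> g < b)))"
proof -
  have pg: "g < d \<or> (d < g \<and> g < c) \<or> (c < g \<and> g < b) \<or> (b < g \<and> g < a) \<or> a < g" using o n by (intro pos4) auto
  have pe: "e < d \<or> (d < e \<and> e < c) \<or> (c < e \<and> e < b) \<or> (b < e \<and> e < a) \<or> a < e" using o n by (intro pos4) auto
  show ?thesis
    using pg pe o n(9) unfolding cnt_pair
    apply -
    apply (elim disjE conjE)
    apply simp_all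
    done
qed

lemma locC_i:
  assumes o: "a > b" "b > c" "c > d" and n: "g \<noteq> a" "g \<noteq> b" "g \<noteq> c" "g \<noteq> d"
  shows "cnt (\<infinity>, g) {#(enat a, b), (enat c, d)#} \<le> cnt (\<infinity>, g) {#(enat a, c), (enat b, d)#} \<and> (cnt (\<infinity>, g) {#(enat a, b), (enat c, d)#} < cnt (\<infinity>, g) {#(enat a, c), (enat b, d)#} \<longrightarrow> (c < g \<and> g < b))"
proof -
  have pg: "g < d \<or> (d < g \<and> g < c) \<or> (c < g \<and> g < b) \<or> (b < g \<and> g < a) \<or> a < g" using o n by (intro pos4) auto
  show ?thesis
    using pg  o n(4) unfolding cnt_pair
    apply -
    apply (elim disjE conjE)
    apply simp_all
    done
qed

lemma locB_e:
  assumes o: "a > b" "b > c" and n: "e \<noteq> a" "e \<noteq> b" "e \<noteq> c" "g \<noteq> a" "g \<noteq> b" "g \<noteq> c" "g < e"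
  shows "cnt (enat e, g) {#(enat a, b), (\<infinity>, c)#} \<le> cnt (enat e, g) {#(enat a, c), (\<infinity>, b)#} \<and> (cnt (enat e, g) {#(enat a, b), (\<infinity>, c)#} < cnt (enat e, g) {#(enat a, c), (\<infinity>, b)#} \<longrightarrow> (a < e \<and> c < g \<and> g < b))"
proof -
  have pg: "g < c \<or> (c < g \<and> g < b) \<or> (b < g \<and> g < a) \<or> a < g" using o n by (intro pos3) auto
  have pe: "e < c \<or> (c < e \<and> e < b) \<or> (b < e \<and> e < a) \<or> a < e" using o n by (intro pos3) auto
  show ?thesis
    using pg pe o n(7) unfolding cnt_pair
    apply -
    apply (elim disjE conjE)
    apply simp_all
    done
qed

lemma locB_i:
  assumes o: "a > b" "b > c" and n: "g \<noteq> a" "g \<noteq> b" "g \<noteq> c"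
  shows "cnt (\<infinity>, g) {#(enat a, b), (\<infinity>, c)#} \<le> cnt (\<infinity>, g) {#(enat a, c), (\<infinity>, b)#} \<and> (cnt (\<infinity>, g) {#(enat a, b), (\<infinity>, c)#} < cnt (\<infinity>, g) {#(enat a, c), (\<infinity>, b)#} \<longrightarrow> (c < g \<and> g < b))"
proof -
  have pg: "g < c \<or> (c < g \<and> g < b) \<or> (b < g \<and> g < a) \<or> a < g" using o n by (intro pos3) auto
  show ?thesis
    using pg  o n(3) unfolding cnt_pair
    apply -
    apply (elim disjE conjE)
    apply simp_all
    done
qed

lemma locD_e:
  assumes o: "a > b" "b > c" and n: "e \<noteq> a" "e \<noteq> b" "e \<noteq> c" "g \<noteq> a" "g \<noteq> b" "g \<noteq> c" "g < e"
  shows "cnt (enat e, g) {#(enat b, c), (\<infinity>, a)#} \<le> cnt (enat e, g) {#(enat a, c), (\<infinity>, b)#} \<and> (cnt (enat e, g) {#(enat b, c), (\<infinity>, a)#} < cnt (enat e, g) {#(enat a, c), (\<infinity>, b)#} \<longrightarrow> (b < e \<and> e < a \<and> g < c))"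
proof -
  have pg: "g < c \<or> (c < g \<and> g < b) \<or> (b < g \<and> g < a) \<or> a < g" using o n by (intro pos3) auto
  have pe: "e < c \<or> (c < e \<and> e < b) \<or> (b < e \<and> e < a) \<or> a < e" using o n by (intro pos3) auto
  show ?thesis
    using pg pe o n(7) unfolding cnt_pair
    apply -
    apply (elim disjE conjE)
    apply simp_all
    done
qed

lemma locD_i:
  assumes o: "a > b" "b > c" and n: "g \<noteq> a" "g \<noteq> b" "g \<noteq> c"
  shows "cnt (\<infinity>, g) {#(enat b, c), (\<infinity>, a)#} \<le> cnt (\<infinity>, g) {#(enat a, c), (\<infinity>, b)#} \<and> (cnt (\<infinity>, g) {#(enat b, c), (\<infinity>, a)#} < cnt (\<infinity>, g) {#(enat a, c), (\<infinity>, b)#} \<longrightarrow> (b < g \<and> g < a))"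
proof -
  have pg: "g < c \<or> (c < g \<and> g < b) \<or> (b < g \<and> g < a) \<or> a < g" using o n by (intro pos3) auto
  show ?thesis
    using pg  o n(3) unfolding cnt_pair
    apply -
    apply (elim disjE conjE)
    apply simp_all
    done
qed

lemma stepA:
  assumes o: "a > b" "b > c" "c > d" and s: "simple (R + {#(enat a, c), (enat b, d)#})"
    and v: "\<forall>x\<in>#R. enat (snd x) < fst x"
  shows "rk (R + {#(enat a, d), (enat b, c)#}) < rk (R + {#(enat a, c), (enat b, d)#}) \<and> (rk (R + {#(enat a, d), (enat b, c)#}) + 2 \<le> rk (R + {#(enat a, c), (enat b, d)#}) \<longrightarrow> (\<exists>z. arc_move (R + {#(enat a, c), (enat b, d)#}) z \<and> arc_move\<^sup>+\<^sup>+ z (R + {#(enat a, d), (enat b, c)#})))"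
proof (rule step_gen)
  show "XX {#(enat a, c), (enat b, d)#} = 2" using o by (simp add: XX_pair)
  show "XX {#(enat a, d), (enat b, c)#} = 0" using o by (simp add: XX_pair)
  fix f assume f: "f \<in># R"
  obtain e g where fe: "f = (e, g)" by (cases f)
  obtain Q where Q: "R = add_mset f Q" using f by (metis multi_member_split)
  have d0: "e \<noteq> enat a \<and> g \<noteq> a" using disj_pt[OF s f, where x="(enat a, c)" and i=a] fe by simp
  have d1: "e \<noteq> enat b \<and> g \<noteq> b" using disj_pt[OF s f, where x="(enat b, d)" and i=b] fe by simp
  have d2: "e \<noteq> enat c \<and> g \<noteq> c" using disj_pt[OF s f, where x="(enat a, c)" and i=c] fe by simp
  have d3: "e \<noteq> enat d \<and> g \<noteq> d" using disj_pt[OF s f, where x="(enat b, d)" and i=d] fe by simp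
  have vg: "enat g < e" using v f fe by fastforce
  show "cnt f {#(enat a, d), (enat b, c)#} \<le> cnt f {#(enat a, c), (enat b, d)#} \<and> (cnt f {#(enat a, d), (enat b, c)#} < cnt f {#(enat a, c), (enat b, d)#} \<longrightarrow> (\<exists>z. arc_move (R + {#(enat a, c), (enat b, d)#}) z \<and> arc_move\<^sup>+\<^sup>+ z (R + {#(enat a, d), (enat b, c)#})))"
  proof (cases e)
    case (enat e')
    have n: "e' \<noteq> a" "e' \<noteq> b" "e' \<noteq> c" "e' \<noteq> d" "g \<noteq> a" "g \<noteq> b" "g \<noteq> c" "g \<noteq> d" "g < e'"
      using d0 d1 d2 d3 vg enat by auto
    note L = locA_e[OF o n]
    show ?thesis unfolding Q fe enat using L facA[where e=e' and Q=Q] o by blast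
  next
    case infinity
    have n: "g \<noteq> a" "g \<noteq> b" "g \<noteq> c" "g \<noteq> d"
      using d0 d1 d2 d3 by auto
    note L = locA_i[OF o n]
    show ?thesis unfolding Q fe infinity using L  o by blast
  qed
qed

lemma stepC:
  assumes o: "a > b" "b > c" "c > d" and s: "simple (R + {#(enat a, c), (enat b, d)#})"
    and v: "\<forall>x\<in>#R. enat (snd x) < fst x"
  shows "rk (R + {#(enat a, b), (enat c, d)#}) < rk (R + {#(enat a, c), (enat b, d)#}) \<and> (rk (R + {#(enat a, b), (enat c, d)#}) + 2 \<le> rk (R + {#(enat a, c), (enat b, d)#}) \<longrightarrow> (\<exists>z. arc_move (R + {#(enat a, c), (enat b, d)#}) z \<and> arc_move\<^sup>+\<^sup>+ z (R + {#(enat a, b), (enat c, d)#})))"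
proof (rule step_gen)
  show "XX {#(enat a, c), (enat b, d)#} = 2" using o by (simp add: XX_pair)
  show "XX {#(enat a, b), (enat c, d)#} = 0" using o by (simp add: XX_pair)
  fix f assume f: "f \<in># R"
  obtain e g where fe: "f = (e, g)" by (cases f)
  obtain Q where Q: "R = add_mset f Q" using f by (metis multi_member_split)
  have d0: "e \<noteq> enat a \<and> g \<noteq> a" using disj_pt[OF s f, where x="(enat a, c)" and i=a] fe by simp
  have d1: "e \<noteq> enat b \<and> g \<noteq> b" using disj_pt[OF s f, where x="(enat b, d)" and i=b] fe by simp
  have d2: "e \<noteq> enat c \<and> g \<noteq> c" using disj_pt[OF s f, where x="(enat a, c)" and i=c] fe by simp
  have d3: "e \<noteq> enat d \<and> g \<noteq> d" using disj_pt[OF s f, where x="(enat b, d)" and i=d] fe by simp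
  have vg: "enat g < e" using v f fe by fastforce
  show "cnt f {#(enat a, b), (enat c, d)#} \<le> cnt f {#(enat a, c), (enat b, d)#} \<and> (cnt f {#(enat a, b), (enat c, d)#} < cnt f {#(enat a, c), (enat b, d)#} \<longrightarrow> (\<exists>z. arc_move (R + {#(enat a, c), (enat b, d)#}) z \<and> arc_move\<^sup>+\<^sup>+ z (R + {#(enat a, b), (enat c, d)#})))"
  proof (cases e)
    case (enat e')
    have n: "e' \<noteq> a" "e' \<noteq> b" "e' \<noteq> c" "e' \<noteq> d" "g \<noteq> a" "g \<noteq> b" "g \<noteq> c" "g \<noteq> d" "g < e'"
      using d0 d1 d2 d3 vg enat by auto
    note L = locC_e[OF o n]
    show ?thesis unfolding Q fe enat using L facC1[where e=e' and Q=Q] facC2[where e=e' and Q=Q] o by blast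
  next
    case infinity
    have n: "g \<noteq> a" "g \<noteq> b" "g \<noteq> c" "g \<noteq> d"
      using d0 d1 d2 d3 by auto
    note L = locC_i[OF o n]
    show ?thesis unfolding Q fe infinity using L facC3[where Q=Q] o by blast
  qed
qed

lemma stepB:
  assumes o: "a > b" "b > c" and s: "simple (R + {#(enat a, c), (\<infinity>, b)#})"
    and v: "\<forall>x\<in>#R. enat (snd x) < fst x"
  shows "rk (R + {#(enat a, b), (\<infinity>, c)#}) < rk (R + {#(enat a, c), (\<infinity>, b)#}) \<and> (rk (R + {#(enat a, b), (\<infinity>, c)#}) + 2 \<le> rk (R + {#(enat a, c), (\<infinity>, b)#}) \<longrightarrow> (\<exists>z. arc_move (R + {#(enat a, c), (\<infinity>, b)#}) z \<and> arc_move\<^sup>+\<^sup>+ z (R + {#(enat a, b), (\<infinity>, c)#})))"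
proof (rule step_gen)
  show "XX {#(enat a, c), (\<infinity>, b)#} = 2" using o by (simp add: XX_pair)
  show "XX {#(enat a, b), (\<infinity>, c)#} = 0" using o by (simp add: XX_pair)
  fix f assume f: "f \<in># R"
  obtain e g where fe: "f = (e, g)" by (cases f)
  obtain Q where Q: "R = add_mset f Q" using f by (metis multi_member_split)
  have d0: "e \<noteq> enat a \<and> g \<noteq> a" using disj_pt[OF s f, where x="(enat a, c)" and i=a] fe by simp
  have d1: "e \<noteq> enat b \<and> g \<noteq> b" using disj_pt[OF s f, where x="(\<infinity>, b)" and i=b] fe by simp
  have d2: "e \<noteq> enat c \<and> g \<noteq> c" using disj_pt[OF s f, where x="(enat a, c)" and i=c] fe by simp
  have vg: "enat g < e" using v f fe by fastforce
  show "cnt f {#(enat a, b), (\<infinity>, c)#} \<le> cnt f {#(enat a, c), (\<infinity>, b)#} \<and> (cnt f {#(enat a, b), (\<infinity>, c)#} < cnt f {#(enat a, c), (\<infinity>, b)#} \<longrightarrow> (\<exists>z. arc_move (R + {#(enat a, c), (\<infinity>, b)#}) z \<and> arc_move\<^sup>+\<^sup>+ z (R + {#(enat a, b), (\<infinity>, c)#})))"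
  proof (cases e)
    case (enat e')
    have n: "e' \<noteq> a" "e' \<noteq> b" "e' \<noteq> c" "g \<noteq> a" "g \<noteq> b" "g \<noteq> c" "g < e'"
      using d0 d1 d2 vg enat by auto
    note L = locB_e[OF o n]
    show ?thesis unfolding Q fe enat using L facB1[where e=e' and Q=Q] o by blast
  next
    case infinity
    have n: "g \<noteq> a" "g \<noteq> b" "g \<noteq> c"
      using d0 d1 d2 by auto
    note L = locB_i[OF o n]
    show ?thesis unfolding Q fe infinity using L facB2[where Q=Q] o by blast
  qed
qed

lemma stepD:
  assumes o: "a > b" "b > c" and s: "simple (R + {#(enat a, c), (\<infinity>, b)#})"
    and v: "\<forall>x\<in>#R. enat (snd x) < fst x"
  shows "rk (R + {#(enat b, c), (\<infinity>, a)#}) < rk (R + {#(enat a, c), (\<infinity>, b)#}) \<and> (rk (R + {#(enat b, c), (\<infinity>, a)#}) + 2 \<le> rk (R + {#(enat a, c), (\<infinity>, b)#}) \<longrightarrow> (\<exists>z. arc_move (R + {#(enat a, c), (\<infinity>, b)#}) z \<and> arc_move\<^sup>+\<^sup>+ z (R + {#(enat b, c), (\<infinity>, a)#})))"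
proof (rule step_gen)
  show "XX {#(enat a, c), (\<infinity>, b)#} = 2" using o by (simp add: XX_pair)
  show "XX {#(enat b, c), (\<infinity>, a)#} = 0" using o by (simp add: XX_pair)
  fix f assume f: "f \<in># R"
  obtain e g where fe: "f = (e, g)" by (cases f)
  obtain Q where Q: "R = add_mset f Q" using f by (metis multi_member_split)
  have d0: "e \<noteq> enat a \<and> g \<noteq> a" using disj_pt[OF s f, where x="(enat a, c)" and i=a] fe by simp
  have d1: "e \<noteq> enat b \<and> g \<noteq> b" using disj_pt[OF s f, where x="(\<infinity>, b)" and i=b] fe by simp
  have d2: "e \<noteq> enat c \<and> g \<noteq> c" using disj_pt[OF s f, where x="(enat a, c)" and i=c] fe by simp
  have vg: "enat g < e" using v f fe by fastforce
  show "cnt f {#(enat b, c), (\<infinity>, a)#} \<le> cnt f {#(enat a, c), (\<infinity>, b)#} \<and> (cnt f {#(enat b, c), (\<infinity>, a)#} < cnt f {#(enat a, c), (\<infinity>, b)#} \<longrightarrow> (\<exists>z. arc_move (R + {#(enat a, c), (\<infinity>, b)#}) z \<and> arc_move\<^sup>+\<^sup>+ z (R + {#(enat b, c), (\<infinity>, a)#})))"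
  proof (cases e)
    case (enat e')
    have n: "e' \<noteq> a" "e' \<noteq> b" "e' \<noteq> c" "g \<noteq> a" "g \<noteq> b" "g \<noteq> c" "g < e'"
      using d0 d1 d2 vg enat by auto
    note L = locD_e[OF o n]
    show ?thesis unfolding Q fe enat using L facD1[where e=e' and Q=Q] o by blast
  next
    case infinity
    have n: "g \<noteq> a" "g \<noteq> b" "g \<noteq> c"
      using d0 d1 d2 by auto
    note L = locD_i[OF o n]
    show ?thesis unfolding Q fe infinity using L facD2[where Q=Q] o by blast
  qed
qed

lemma P_valid: "D \<in> arc_diagrams al be ga \<Longrightarrow> x \<in># D \<Longrightarrow> 1 \<le> snd x \<and> enat (snd x) < fst x"
  unfolding arc_diagrams_def by blast

lemma P_simple:
  assumes vs: "\<forall>i\<ge>1. conj_part be i \<le> conj_part ga i + 1" and D: "D \<in> arc_diagrams al be ga"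
  shows "simple D"
  unfolding simple_def
proof
  fix i
  show "size (filter_mset (\<lambda>x. fst x = enat i \<or> snd x = i) D) \<le> 1"
  proof (cases "i = 0")
    case True
    have "filter_mset (\<lambda>x. fst x = enat i \<or> snd x = i) D = {#}"
    proof (rule filter_mset_eq_mempty_iff[THEN iffD2], intro allI impI notI)
      fix x assume x: "x \<in># D" "fst x = enat i \<or> snd x = i"
      have "1 \<le> snd x" "enat (snd x) < fst x" using P_valid[OF D x(1)] by auto
      then show False using x(2) True by (auto simp: zero_enat_def[symmetric])
    qed
    then show ?thesis by (metis le0 size_empty)
  next
    case False
    then have "int (size (filter_mset (\<lambda>x. fst x = enat i \<or> snd x = i) D)) = int (conj_part be i) - int (conj_part ga i)"
      using D unfolding arc_diagrams_def by auto
    moreover have "conj_part be i \<le> conj_part ga i + 1" using vs False by auto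
    ultimately show ?thesis by linarith
  qed
qed

lemma sz_swap: "M \<subseteq># D \<Longrightarrow> size (filter_mset Q N) = size (filter_mset Q M) \<Longrightarrow>
   size (filter_mset Q (D - M + N)) = size (filter_mset Q D)"
proof -
  assume a: "M \<subseteq># D" "size (filter_mset Q N) = size (filter_mset Q M)"
  have s: "filter_mset Q M \<subseteq># filter_mset Q D" using a(1) by (rule multiset_filter_mono)
  have "size (filter_mset Q (D - M + N)) = size (filter_mset Q D - filter_mset Q M) + size (filter_mset Q N)"
    by simp
  also have "\<dots> = size (filter_mset Q D) - size (filter_mset Q M) + size (filter_mset Q M)"
    using size_Diff_submset[OF s] a(2) by simp
  also have "\<dots> = size (filter_mset Q D)" using size_mset_mono[OF s] by simp
  finally show ?thesis .
qed

lemma swapP: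
  assumes D: "D \<in> arc_diagrams al be ga" and sub: "M \<subseteq># D"
    and vN: "\<forall>x\<in>#N. 1 \<le> snd x \<and> enat (snd x) < fst x"
    and a: "size (filter_mset (\<lambda>x. fst x \<noteq> \<infinity>) N) = size (filter_mset (\<lambda>x. fst x \<noteq> \<infinity>) M)"
    and p: "size (filter_mset (\<lambda>x. fst x = \<infinity>) N) = size (filter_mset (\<lambda>x. fst x = \<infinity>) M)"
    and i: "\<forall>i. size (filter_mset (\<lambda>x. fst x = enat i \<or> snd x = i) N) = size (filter_mset (\<lambda>x. fst x = enat i \<or> snd x = i) M)"
  shows "D - M + N \<in> arc_diagrams al be ga"
proof -
  have v: "\<forall>x\<in>#D - M + N. 1 \<le> snd x \<and> enat (snd x) < fst x"
  proof
    fix x assume "x \<in># D - M + N"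
    then have "x \<in># D \<or> x \<in># N" by (auto dest: in_diffD)
    then show "1 \<le> snd x \<and> enat (snd x) < fst x" using vN P_valid[OF D] by blast
  qed
  show ?thesis
    using D v sz_swap[OF sub a] sz_swap[OF sub p] sz_swap[OF sub i[rule_format]]
    unfolding arc_diagrams_def by simp
qed

lemma clo:
  assumes D: "D' \<in> arc_diagrams al be ga" and m: "arc_move D' D"
  shows "D \<in> arc_diagrams al be ga"
  using m unfolding arc_move_def
proof (elim disjE exE conjE)
  fix a b c d :: nat
  assume o: "a > b" "b > c" "c > d" and sub: "{#(enat a, c), (enat b, d)#} \<subseteq># D'"
  have vd: "1 \<le> d" using P_valid[OF D, of "(enat b, d)"] sub by (auto dest: mset_subset_eqD)
  {
    assume eq: "D = D' - {#(enat a, c), (enat b, d)#} + {#(enat a, d), (enat b, c)#}"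
    have "D' - {#(enat a, c), (enat b, d)#} + {#(enat a, d), (enat b, c)#} \<in> arc_diagrams al be ga"
      by (rule swapP[OF D sub]) (use o vd in auto)
    then show ?thesis using eq by simp
  }
  {
    assume eq: "D = D' - {#(enat a, c), (enat b, d)#} + {#(enat a, b), (enat c, d)#}"
    have "D' - {#(enat a, c), (enat b, d)#} + {#(enat a, b), (enat c, d)#} \<in> arc_diagrams al be ga"
      by (rule swapP[OF D sub]) (use o vd in auto)
    then show ?thesis using eq by simp
  }
next
  fix a b c :: nat
  assume o: "a > b" "b > c" and sub: "{#(enat a, c), (\<infinity>, b)#} \<subseteq># D'"
  have vd: "1 \<le> c" using P_valid[OF D, of "(enat a, c)"] sub by (auto dest: mset_subset_eqD)
  {
    assume eq: "D = D' - {#(enat a, c), (\<infinity>, b)#} + {#(enat a, b), (\<infinity>, c)#}"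
    have "D' - {#(enat a, c), (\<infinity>, b)#} + {#(enat a, b), (\<infinity>, c)#} \<in> arc_diagrams al be ga"
      by (rule swapP[OF D sub]) (use o vd in auto)
    then show ?thesis using eq by simp
  }
  {
    assume eq: "D = D' - {#(enat a, c), (\<infinity>, b)#} + {#(enat b, c), (\<infinity>, a)#}"
    have "D' - {#(enat a, c), (\<infinity>, b)#} + {#(enat b, c), (\<infinity>, a)#} \<in> arc_diagrams al be ga"
      by (rule swapP[OF D sub]) (use o vd in auto)
    then show ?thesis using eq by simp
  }
qed

lemma move_rank:
  assumes vs: "\<forall>i\<ge>1. conj_part be i \<le> conj_part ga i + 1"
    and D: "D' \<in> arc_diagrams al be ga" and m: "arc_move D' D"
  shows "rk D < rk D' \<and> (rk D + 2 \<le> rk D' \<longrightarrow> (\<exists>z. arc_move D' z \<and> arc_move\<^sup>+\<^sup>+ z D))"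
proof -
  have s: "simple D'" by (rule P_simple[OF vs D])
  from m[unfolded arc_move_def] show ?thesis
  proof (elim disjE exE conjE)
    fix a b c d :: nat
    assume o: "a > b" "b > c" "c > d" and sub: "{#(enat a, c), (enat b, d)#} \<subseteq># D'"
    define R where "R = D' - {#(enat a, c), (enat b, d)#}"
    have DR: "D' = R + {#(enat a, c), (enat b, d)#}" unfolding R_def by (rule subset_mset.diff_add[OF sub, symmetric])
    have sR: "simple (R + {#(enat a, c), (enat b, d)#})" using s DR by simp
    have vR: "\<forall>x\<in>#R. enat (snd x) < fst x" using P_valid[OF D] DR by auto
    {
      assume "D = D' - {#(enat a, c), (enat b, d)#} + {#(enat a, d), (enat b, c)#}"
      then have DD: "D = R + {#(enat a, d), (enat b, c)#}" unfolding R_def by simp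
      show ?thesis using stepA[OF o sR vR] unfolding DD DR by blast
    }
    {
      assume "D = D' - {#(enat a, c), (enat b, d)#} + {#(enat a, b), (enat c, d)#}"
      then have DD: "D = R + {#(enat a, b), (enat c, d)#}" unfolding R_def by simp
      show ?thesis using stepC[OF o sR vR] unfolding DD DR by blast
    }
  next
    fix a b c :: nat
    assume o: "a > b" "b > c" and sub: "{#(enat a, c), (\<infinity>, b)#} \<subseteq># D'"
    define R where "R = D' - {#(enat a, c), (\<infinity>, b)#}"
    have DR: "D' = R + {#(enat a, c), (\<infinity>, b)#}" unfolding R_def by (rule subset_mset.diff_add[OF sub, symmetric])
    have sR: "simple (R + {#(enat a, c), (\<infinity>, b)#})" using s DR by simp
    have vR: "\<forall>x\<in>#R. enat (snd x) < fst x" using P_valid[OF D] DR by auto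
    {
      assume "D = D' - {#(enat a, c), (\<infinity>, b)#} + {#(enat a, b), (\<infinity>, c)#}"
      then have DD: "D = R + {#(enat a, b), (\<infinity>, c)#}" unfolding R_def by simp
      show ?thesis using stepB[OF o sR vR] unfolding DD DR by blast
    }
    {
      assume "D = D' - {#(enat a, c), (\<infinity>, b)#} + {#(enat b, c), (\<infinity>, a)#}"
      then have DD: "D = R + {#(enat b, c), (\<infinity>, a)#}" unfolding R_def by simp
      show ?thesis using stepD[OF o sR vR] unfolding DD DR by blast
    }
  qed
qed

lemma size_split: "size (filter_mset P D) + size (filter_mset (\<lambda>x. \<not> P x) D) = size D"
  by (induction D) auto

lemma bound:
  assumes D: "D \<in> arc_diagrams al be ga" and x: "x \<in># D" and i: "fst x = enat i \<or> snd x = i" "1 \<le> i"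
  shows "i \<le> sum_list be"
proof -
  have "x \<in># filter_mset (\<lambda>x. fst x = enat i \<or> snd x = i) D" using x i by simp
  then have "filter_mset (\<lambda>x. fst x = enat i \<or> snd x = i) D \<noteq> {#}" by (metis empty_iff set_mset_empty)
  then have "0 < size (filter_mset (\<lambda>x. fst x = enat i \<or> snd x = i) D)"
    using nonempty_has_size by blast
  moreover have "int (size (filter_mset (\<lambda>x. fst x = enat i \<or> snd x = i) D)) = int (conj_part be i) - int (conj_part ga i)"
    using D i unfolding arc_diagrams_def by auto
  ultimately have "0 < length (filter (\<lambda>y. i \<le> y) be)" unfolding conj_part_def by linarith
  then have "filter (\<lambda>y. i \<le> y) be \<noteq> []" by auto
  then obtain y where "y \<in> set (filter (\<lambda>y. i \<le> y) be)" using hd_in_set by blast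
  then have "y \<in> set be" "i \<le> y" by auto
  then show ?thesis using member_le_sum_list[of y be] by linarith
qed

lemma finP: "finite (arc_diagrams al be ga)"
proof -
  define N where "N = sum_list be"
  define A where "A = (insert \<infinity> (enat ` {..N})) \<times> {..N}"
  have "arc_diagrams al be ga \<subseteq> multisets_of_size A (conj_part al 1)"
  proof
    fix D assume D: "D \<in> arc_diagrams al be ga"
    have "set_mset D \<subseteq> A"
    proof
      fix x assume x: "x \<in># D"
      obtain e g where xe: "x = (e, g)" by (cases x)
      have v: "1 \<le> g" "enat g < e" using P_valid[OF D x] xe by auto
      have g: "g \<le> N" using bound[OF D x, of g] v xe unfolding N_def by simp
      have "e \<in> insert \<infinity> (enat ` {..N})"
      proof (cases e)
        case (enat e')
        then have "e' \<le> N" using bound[OF D x, of e'] v xe unfolding N_def by simp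
        then show ?thesis using enat by auto
      qed simp
      then show "x \<in> A" using g xe unfolding A_def by auto
    qed
    moreover have "size D = conj_part al 1"
    proof -
      have "size D = size (filter_mset (\<lambda>x. fst x \<noteq> \<infinity>) D) + size (filter_mset (\<lambda>x. \<not> fst x \<noteq> \<infinity>) D)"
        by (rule size_split[symmetric])
      then have "size D = size (filter_mset (\<lambda>x. fst x \<noteq> \<infinity>) D) + size (filter_mset (\<lambda>x. fst x = \<infinity>) D)"
        by simp
      moreover have "size (filter_mset (\<lambda>x. fst x \<noteq> \<infinity>) D) = conj_part al 2"
        "int (size (filter_mset (\<lambda>x. fst x = \<infinity>) D)) = int (conj_part al 1) - int (conj_part al 2)"
        using D unfolding arc_diagrams_def by auto
      ultimately show ?thesis by linarith
    qed
    ultimately show "D \<in> multisets_of_size A (conj_part al 1)" unfolding multisets_of_size_def by auto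
  qed
  moreover have "finite A" unfolding A_def by auto
  ultimately show ?thesis using finite_subset finite_multisets_of_size by metis
qed

lemma two_sub: "u \<in># D \<Longrightarrow> v \<in># D \<Longrightarrow> u \<noteq> v \<Longrightarrow> {#u, v#} \<subseteq># D"
proof -
  assume a: "u \<in># D" "v \<in># D" "u \<noteq> v"
  obtain D1 where D1: "D = add_mset u D1" using a(1) by (metis multi_member_split)
  have "v \<in># D1" using a D1 by auto
  then obtain D2 where D2: "D1 = add_mset v D2" by (metis multi_member_split)
  show ?thesis using D1 D2 by simp
qed

lemma exA: "a > b \<Longrightarrow> b > c \<Longrightarrow> c > d \<Longrightarrow> {#(enat a, c), (enat b, d)#} \<subseteq># D \<Longrightarrow> \<exists>u. arc_move D u"
  unfolding arc_move_def
  apply (rule exI[of _ "D - {#(enat a, c), (enat b, d)#} + {#(enat a, d), (enat b, c)#}"])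
  apply (rule disjI1)
  apply (rule exI[of _ a], rule exI[of _ b], rule exI[of _ c], rule exI[of _ d])
  by simp

lemma exB: "a > b \<Longrightarrow> b > c \<Longrightarrow> {#(enat a, c), (\<infinity>, b)#} \<subseteq># D \<Longrightarrow> \<exists>u. arc_move D u"
  unfolding arc_move_def
  apply (rule exI[of _ "D - {#(enat a, c), (\<infinity>, b)#} + {#(enat a, b), (\<infinity>, c)#}"])
  apply (rule disjI2)
  apply (rule exI[of _ a], rule exI[of _ b], rule exI[of _ c])
  by simp

lemma bot_ex:
  assumes "0 < XX D" shows "\<exists>u. arc_move D u"
proof -
  have "\<exists>u\<in>#D. 0 < cnt u D"
  proof (rule ccontr)
    assume "\<not> (\<exists>u\<in>#D. 0 < cnt u D)"
    then have "\<And>u. u \<in># D \<Longrightarrow> cnt u D = 0" by auto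
    then have "XX D = (\<Sum>u\<in>#D. (0::nat))" unfolding XX_def by (metis (no_types, lifting) image_mset_cong)
    with assms show False by simp
  qed
  then obtain u where u: "u \<in># D" "0 < cnt u D" by blast
  from u(2) have "0 < size (filter_mset (cr u) D)" unfolding cnt_def .
  then have "filter_mset (cr u) D \<noteq> {#}" using nonempty_has_size by blast
  then obtain v where v: "v \<in># filter_mset (cr u) D" by (meson multiset_nonemptyE)
  then have v2: "v \<in># D" "cr u v" by auto
  then have "u \<noteq> v" by auto
  then have sub: "{#u, v#} \<subseteq># D" "{#v, u#} \<subseteq># D" using two_sub[OF u(1) v2(1)] two_sub[OF v2(1) u(1)] by auto
  obtain eu nu where ue: "u = (eu, nu)" by (cases u)
  obtain ev nv where ve: "v = (ev, nv)" by (cases v)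
  show ?thesis
  proof (cases eu)
    case (enat m)
    note mm = enat
    show ?thesis
    proof (cases ev)
      case (enat k)
      have "(nv < nu \<and> nu < k \<and> k < m) \<or> (nu < nv \<and> nv < m \<and> m < k)"
        using v2(2) ue ve mm enat by simp
      then show ?thesis
      proof
        assume o: "nv < nu \<and> nu < k \<and> k < m"
        show ?thesis by (rule exA[where a=m and b=k and c=nu and d=nv]) (use o sub ue ve mm enat in auto)
      next
        assume o: "nu < nv \<and> nv < m \<and> m < k"
        show ?thesis by (rule exA[where a=k and b=m and c=nv and d=nu]) (use o sub ue ve mm enat in auto)
      qed
    next
      case infinity
      have o: "nu < nv \<and> nv < m" using v2(2) ue ve mm infinity by simp
      show ?thesis by (rule exB[where a=m and b=nv and c=nu]) (use o sub ue ve mm infinity in auto)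
    qed
  next
    case infinity
    note ii = infinity
    show ?thesis
    proof (cases ev)
      case (enat k)
      have o: "nv < nu \<and> nu < k" using v2(2) ue ve ii enat by simp
      show ?thesis by (rule exB[where a=k and b=nu and c=nv]) (use o sub ue ve ii enat in auto)
    next
      case infinity
      then show ?thesis using v2(2) ue ve ii by simp
    qed
  qed
qed

lemma up_arcs:
  assumes D: "D \<in> arc_diagrams al be ga" and sub: "{#(enat m, n), (enat k, r)#} \<subseteq># D"
    and mk: "k < m" and dist: "n \<noteq> k" "n \<noteq> r" "m \<noteq> r"
    and val: "1 \<le> n" "n < m" "1 \<le> r" "r < k"
    and nc: "\<not> cr (enat m, n) (enat k, r)"
  shows "\<exists>D'\<in>arc_diagrams al be ga. arc_move D' D"
proof (cases "k < n")
  case True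
  have P: "D - {#(enat m, n), (enat k, r)#} + {#(enat m, k), (enat n, r)#} \<in> arc_diagrams al be ga"
    by (rule swapP[OF D sub]) (use True mk dist val in auto)
  have "arc_move (D - {#(enat m, n), (enat k, r)#} + {#(enat m, k), (enat n, r)#}) D"
    by (rule mvC[where a=m and b=n and c=k and d=r and Q="D - {#(enat m, n), (enat k, r)#}", OF _ _ _ refl subset_mset.diff_add[OF sub, symmetric]])
      (use True mk dist val in simp_all)
  then show ?thesis using P by blast
next
  case False
  then have nk: "n < k" using dist by simp
  then have nr: "n < r" using nc mk dist by auto
  have P: "D - {#(enat m, n), (enat k, r)#} + {#(enat m, r), (enat k, n)#} \<in> arc_diagrams al be ga"
    by (rule swapP[OF D sub]) (use nk nr mk dist val in auto)
  have "arc_move (D - {#(enat m, n), (enat k, r)#} + {#(enat m, r), (enat k, n)#}) D"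
    by (rule mvA[where a=m and b=k and c=r and d=n and Q="D - {#(enat m, n), (enat k, r)#}", OF _ _ _ refl subset_mset.diff_add[OF sub, symmetric]])
      (use nk nr mk dist val in simp_all)
  then show ?thesis using P by blast
qed

lemma up_pole:
  assumes D: "D \<in> arc_diagrams al be ga" and sub: "{#(enat m, n), (\<infinity>, r)#} \<subseteq># D"
    and dist: "r \<noteq> m" "r \<noteq> n"
    and val: "1 \<le> n" "n < m" "1 \<le> r"
    and nc: "\<not> cr (enat m, n) (\<infinity>, r)"
  shows "\<exists>D'\<in>arc_diagrams al be ga. arc_move D' D"
proof (cases "r < n")
  case True
  have P: "D - {#(enat m, n), (\<infinity>, r)#} + {#(enat m, r), (\<infinity>, n)#} \<in> arc_diagrams al be ga"
    by (rule swapP[OF D sub]) (use True dist val in auto)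
  have "arc_move (D - {#(enat m, n), (\<infinity>, r)#} + {#(enat m, r), (\<infinity>, n)#}) D"
    by (rule mvB[where a=m and b=n and c=r and Q="D - {#(enat m, n), (\<infinity>, r)#}", OF _ _ refl subset_mset.diff_add[OF sub, symmetric]])
      (use True dist val in simp_all)
  then show ?thesis using P by blast
next
  case False
  then have rm: "m < r" using dist nc val by auto
  have P: "D - {#(enat m, n), (\<infinity>, r)#} + {#(enat r, n), (\<infinity>, m)#} \<in> arc_diagrams al be ga"
    by (rule swapP[OF D sub]) (use rm dist val in auto)
  have "arc_move (D - {#(enat m, n), (\<infinity>, r)#} + {#(enat r, n), (\<infinity>, m)#}) D"
    by (rule mvD[where a=r and b=m and c=n and Q="D - {#(enat m, n), (\<infinity>, r)#}", OF _ _ refl subset_mset.diff_add[OF sub, symmetric]])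
      (use rm dist val in simp_all)
  then show ?thesis using P by blast
qed

lemma count_le1: "simple D \<Longrightarrow> count D u \<le> 1"
proof (rule ccontr)
  assume s: "simple D" and "\<not> count D u \<le> 1"
  then have "2 \<le> count D u" by simp
  then have "replicate_mset 2 u \<subseteq># D" by (simp add: count_le_replicate_mset_subset_eq)
  moreover have "replicate_mset 2 u = {#u#} + {#u#}" by (simp add: numeral_2_eq_2)
  ultimately have "{#u#} + {#u#} \<subseteq># D" by simp
  then show False using simple_pair[OF s, of u u "snd u"] by simp
qed

lemma all_cross:
  assumes vs: "\<forall>i\<ge>1. conj_part be i \<le> conj_part ga i + 1"
    and D: "D \<in> arc_diagrams al be ga" and nu: "\<forall>u\<in>arc_diagrams al be ga. \<not> arc_move u D"
    and sub: "{#u, v#} \<subseteq># D" and fu: "fst u \<noteq> \<infinity>"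
  shows "cr u v"
proof (rule ccontr)
  assume nc: "\<not> cr u v"
  have s: "simple D" by (rule P_simple[OF vs D])
  have sub2: "{#u#} + {#v#} \<subseteq># D" using sub by (simp add: add_mset_commute)
  have sep: "\<not> ((fst u = enat i \<or> snd u = i) \<and> (fst v = enat i \<or> snd v = i))" for i
    using simple_pair[OF s sub2] by blast
  have uD: "u \<in># D" "v \<in># D" using sub by (auto dest: mset_subset_eqD)
  obtain m n where ue: "u = (enat m, n)" using fu by (cases u) auto
  obtain ev r where ve: "v = (ev, r)" by (cases v)
  have vu: "1 \<le> n" "n < m" using P_valid[OF D uD(1)] ue by auto
  have vv: "1 \<le> r" "enat r < ev" using P_valid[OF D uD(2)] ve by auto
  have d1: "r \<noteq> m" "r \<noteq> n" using sep[of m] sep[of n] ue ve by auto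
  have "\<exists>D'\<in>arc_diagrams al be ga. arc_move D' D"
  proof (cases ev)
    case (enat k)
    have d2: "k \<noteq> m" "k \<noteq> n" using sep[of m] sep[of n] ue ve enat by auto
    show ?thesis
    proof (cases "k < m")
      case True
      show ?thesis
        by (rule up_arcs[OF D, where m=m and n=n and k=k and r=r])
           (use sub ue ve enat True d1 d2 vu vv nc in auto)
    next
      case False
      then have km: "m < k" using d2 by simp
      have sub': "{#(enat k, r), (enat m, n)#} \<subseteq># D" using sub ue ve enat by (simp add: add_mset_commute)
      show ?thesis
        by (rule up_arcs[OF D sub' km])
           (use ue ve enat d1 d2 vu vv nc cr_sym in auto)
    qed
  next
    case infinity
    show ?thesis
      by (rule up_pole[OF D, where m=m and n=n and r=r])
         (use sub ue ve infinity d1 vu vv nc in auto)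
  qed
  then show False using nu by blast
qed

lemma top_rk:
  assumes vs: "\<forall>i\<ge>1. conj_part be i \<le> conj_part ga i + 1"
    and D: "D \<in> arc_diagrams al be ga" and nu: "\<forall>u\<in>arc_diagrams al be ga. \<not> arc_move u D"
  shows "rk D = (conj_part al 2 * (conj_part al 2 + (conj_part al 1 - conj_part al 2) - 1)
                 + (conj_part al 1 - conj_part al 2) * conj_part al 2) div 2"
proof -
  have s: "simple D" by (rule P_simple[OF vs D])
  define A where "A = filter_mset (\<lambda>x. fst x \<noteq> \<infinity>) D"
  define Pl where "Pl = filter_mset (\<lambda>x. fst x = \<infinity>) D"
  have kA: "size A = conj_part al 2" using D unfolding A_def arc_diagrams_def by auto
  have "int (size Pl) = int (conj_part al 1) - int (conj_part al 2)" using D unfolding Pl_def arc_diagrams_def by auto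
  then have kP: "size Pl = conj_part al 1 - conj_part al 2" by linarith
  have DAP: "D = A + Pl" unfolding A_def Pl_def by (rule multiset_eqI) simp
  have sizeD: "size D = size A + size Pl"
  proof -
    have "size (A + Pl) = size A + size Pl" by simp
    then show ?thesis using DAP by simp
  qed
  define f where "f = (\<lambda>u. cnt u D)"
  have ca: "f u = size D - 1" if u: "u \<in># A" for u
  proof -
    have uD: "u \<in># D" and fu: "fst u \<noteq> \<infinity>" using u unfolding A_def by auto
    have "filter_mset (cr u) D = filter_mset (\<lambda>x. x \<noteq> u) D"
    proof (rule filter_mset_cong[OF refl])
      fix x assume x: "x \<in># D"
      show "cr u x \<longleftrightarrow> x \<noteq> u"
      proof
        assume "cr u x" then show "x \<noteq> u" by auto
      next
        assume "x \<noteq> u"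
        then have "{#u, x#} \<subseteq># D" using two_sub[OF uD x] by auto
        then show "cr u x" using all_cross[OF vs D nu _ fu] by blast
      qed
    qed
    moreover have "size (filter_mset (\<lambda>x. x = u) D) + size (filter_mset (\<lambda>x. \<not> x = u) D) = size D"
      by (rule size_split)
    moreover have "size (filter_mset (\<lambda>x. x = u) D) = count D u"
      using filter_eq_replicate_mset[where D=D and x=u] by simp
    moreover have "count D u = 1"
    proof -
      have "count D u \<le> 1" by (rule count_le1[OF s])
      moreover have "0 < count D u" using uD by simp
      ultimately show ?thesis by linarith
    qed
    ultimately show ?thesis unfolding f_def cnt_def by simp
  qed
  have cp: "f u = size A" if u: "u \<in># Pl" for u
  proof -
    have uD: "u \<in># D" and fu: "fst u = \<infinity>" using u unfolding Pl_def by auto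
    obtain g where ue: "u = (\<infinity>, g)" using fu by (cases u) auto
    have "filter_mset (cr u) D = A" unfolding A_def
    proof (rule filter_mset_cong[OF refl])
      fix x assume x: "x \<in># D"
      obtain ex r where xe: "x = (ex, r)" by (cases x)
      show "cr u x \<longleftrightarrow> fst x \<noteq> \<infinity>"
      proof (cases "ex = \<infinity>")
        case True
        then show ?thesis using ue xe by simp
      next
        case False
        then have "x \<noteq> u" using ue xe by auto
        then have "{#x, u#} \<subseteq># D" using two_sub[OF x uD] by auto
        then have "cr x u" using all_cross[OF vs D nu] False xe by auto
        then show ?thesis using cr_sym False xe by auto
      qed
    qed
    then show ?thesis unfolding f_def cnt_def by simp
  qed
  have "XX D = (\<Sum>u\<in>#D. f u)" unfolding XX_def f_def by simp
  also have "\<dots> = (\<Sum>u\<in>#A. f u) + (\<Sum>u\<in>#Pl. f u)" using DAP by simp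
  also have "(\<Sum>u\<in>#A. f u) = (\<Sum>u\<in>#A. size D - 1)" using ca by (metis (no_types, lifting) image_mset_cong)
  also have "(\<Sum>u\<in>#Pl. f u) = (\<Sum>u\<in>#Pl. size A)" using cp by (metis (no_types, lifting) image_mset_cong)
  finally have "XX D = size A * (size D - 1) + size Pl * size A" by simp
  then show ?thesis unfolding rk_def using kA kP sizeD by simp
qed

lemma ex_max_rk: "finite S \<Longrightarrow> S \<noteq> {} \<Longrightarrow> \<exists>t\<in>S. \<forall>w\<in>S. (f w::nat) \<le> f t"
proof -
  assume a: "finite S" "S \<noteq> {}"
  then have "Max (f ` S) \<in> f ` S" by auto
  then obtain t where t: "t \<in> S" "f t = Max (f ` S)" by auto
  have "\<forall>w\<in>S. f w \<le> f t" using a t by auto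
  then show ?thesis using t by blast
qed

lemma ex_min_rk: "finite S \<Longrightarrow> S \<noteq> {} \<Longrightarrow> \<exists>t\<in>S. \<forall>w\<in>S. f t \<le> (f w::nat)"
proof -
  assume a: "finite S" "S \<noteq> {}"
  then have "Min (f ` S) \<in> f ` S" by auto
  then obtain t where t: "t \<in> S" "f t = Min (f ` S)" by auto
  have "\<forall>w\<in>S. f t \<le> f w" using a t by auto
  then show ?thesis using t by blast
qed

lemma abs_chain:
  fixes P :: "'a set" and m :: "'a \<Rightarrow> 'a \<Rightarrow> bool" and rk :: "'a \<Rightarrow> nat"
  assumes finP: "finite P"
    and clo: "\<And>x y. x \<in> P \<Longrightarrow> m x y \<Longrightarrow> y \<in> P"
    and dec: "\<And>x y. x \<in> P \<Longrightarrow> m x y \<Longrightarrow> rk y < rk x"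
    and fac: "\<And>x y. x \<in> P \<Longrightarrow> m x y \<Longrightarrow> rk y + 2 \<le> rk x \<Longrightarrow> \<exists>z. m x z \<and> m\<^sup>+\<^sup>+ z y"
    and top: "\<And>x. x \<in> P \<Longrightarrow> (\<forall>u\<in>P. \<not> m u x) \<Longrightarrow> rk x = T"
    and bot: "\<And>x. x \<in> P \<Longrightarrow> (\<forall>u. \<not> m x u) \<Longrightarrow> rk x = 0"
    and CP: "C \<subseteq> P"
    and Cch: "\<forall>x\<in>C. \<forall>y\<in>C. m\<^sup>*\<^sup>* y x \<or> m\<^sup>*\<^sup>* x y"
    and Cmax: "\<not> (\<exists>C'. (C' \<subseteq> P \<and> (\<forall>x\<in>C'. \<forall>y\<in>C'. m\<^sup>*\<^sup>* y x \<or> m\<^sup>*\<^sup>* x y)) \<and> C \<subset> C')"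
  shows "finite C \<and> card C = (if P = {} then 0 else T + 1)"
proof -
  have path: "y \<in> P \<and> rk y \<le> rk x \<and> (x \<noteq> y \<longrightarrow> rk y < rk x)" if "m\<^sup>*\<^sup>* x y" "x \<in> P" for x y
    using that
  proof (induction rule: rtranclp_induct)
    case base thus ?case by simp
  next
    case (step y z)
    then have "z \<in> P" "rk z < rk y" using clo dec by blast+
    with step show ?case by auto
  qed
  have finC: "finite C" using CP finP finite_subset by blast
  show ?thesis
  proof (cases "P = {}")
    case True thus ?thesis using CP finC by auto
  next
    case False
    have ext: False if "z \<in> P" "z \<notin> C" "\<forall>w\<in>C. m\<^sup>*\<^sup>* w z \<or> m\<^sup>*\<^sup>* z w" for z
    proof -
      have "insert z C \<subseteq> P" using that CP by auto
      moreover have "\<forall>x\<in>insert z C. \<forall>y\<in>insert z C. m\<^sup>*\<^sup>* y x \<or> m\<^sup>*\<^sup>* x y"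
        using that Cch by auto
      moreover have "C \<subset> insert z C" using that by auto
      ultimately have "\<exists>C'. (C' \<subseteq> P \<and> (\<forall>x\<in>C'. \<forall>y\<in>C'. m\<^sup>*\<^sup>* y x \<or> m\<^sup>*\<^sup>* x y)) \<and> C \<subset> C'"
        by (intro exI[of _ "insert z C"]) simp
      with Cmax show False by (rule notE)
    qed
    have Cne: "C \<noteq> {}"
    proof
      assume "C = {}"
      then obtain p where "p \<in> P" "p \<notin> C" using False by auto
      thus False using ext \<open>C = {}\<close> by auto
    qed
    have rkC: "m\<^sup>*\<^sup>* y x" if a: "x \<in> C" "rk x \<le> rk y" "y \<in> C" for x y
    proof (cases "m\<^sup>*\<^sup>* y x")
      case False
      have "m\<^sup>*\<^sup>* y x \<or> m\<^sup>*\<^sup>* x y" using bspec[OF bspec[OF Cch a(1)] a(3)] .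
      with False have xy: "m\<^sup>*\<^sup>* x y" by simp
      have "x \<in> P" using a CP by auto
      then have pth: "y \<in> P \<and> rk y \<le> rk x \<and> (x \<noteq> y \<longrightarrow> rk y < rk x)" by (rule path[OF xy])
      have "x = y"
      proof (rule ccontr)
        assume "x \<noteq> y"
        with pth have "rk y < rk x" by blast
        with a(2) show False by simp
      qed
      then show ?thesis by simp
    qed
    have inj: "inj_on rk C"
    proof (rule inj_onI)
      fix x y assume xy: "x \<in> C" "y \<in> C" "rk x = rk y"
      then have yx: "m\<^sup>*\<^sup>* y x" using rkC by simp
      have "y \<in> P" using xy CP by auto
      then have pth: "x \<in> P \<and> rk x \<le> rk y \<and> (y \<noteq> x \<longrightarrow> rk x < rk y)" by (rule path[OF yx])
      show "x = y"
      proof (rule ccontr)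
        assume "x \<noteq> y"
        with pth have "rk x < rk y" by auto
        with xy(3) show False by simp
      qed
    qed
    obtain t where t: "t \<in> C" "\<forall>w\<in>C. rk w \<le> rk t"
      using ex_max_rk[OF finC Cne] by blast
    obtain b where b: "b \<in> C" "\<forall>w\<in>C. rk b \<le> rk w"
      using ex_min_rk[OF finC Cne] by blast
    have tT: "rk t = T"
    proof (rule top)
      show tP: "t \<in> P" using t CP by auto
      show "\<forall>u\<in>P. \<not> m u t"
      proof (intro ballI notI)
        fix u assume u: "u \<in> P" "m u t"
        have "rk t < rk u" using dec u by blast
        then have uC: "u \<notin> C" using t by auto
        have "\<forall>w\<in>C. m\<^sup>*\<^sup>* w u \<or> m\<^sup>*\<^sup>* u w"
        proof
          fix w assume "w \<in> C"
          then have "m\<^sup>*\<^sup>* t w" using rkC t by blast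
          then have "m\<^sup>*\<^sup>* u w" using u(2) by (meson converse_rtranclp_into_rtranclp)
          then show "m\<^sup>*\<^sup>* w u \<or> m\<^sup>*\<^sup>* u w" by blast
        qed
        then show False using ext[OF u(1) uC] by blast
      qed
    qed
    have b0: "rk b = 0"
    proof (rule bot)
      show bP: "b \<in> P" using b CP by auto
      show "\<forall>u. \<not> m b u"
      proof (intro allI notI)
        fix u assume u: "m b u"
        have uP: "u \<in> P" using clo u bP by blast
        have "rk u < rk b" using dec u bP by blast
        then have uC: "u \<notin> C" using b by auto
        have "\<forall>w\<in>C. m\<^sup>*\<^sup>* w u \<or> m\<^sup>*\<^sup>* u w"
        proof
          fix w assume "w \<in> C"
          then have "m\<^sup>*\<^sup>* w b" using rkC b by blast
          then have "m\<^sup>*\<^sup>* w u" using u by (rule rtranclp.rtrancl_into_rtrancl)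
          then show "m\<^sup>*\<^sup>* w u \<or> m\<^sup>*\<^sup>* u w" by blast
        qed
        then show False using ext[OF uP uC] by blast
      qed
    qed
    have img: "rk ` C = {0..T}"
    proof
      show "rk ` C \<subseteq> {0..T}" using t tT by auto
      show "{0..T} \<subseteq> rk ` C"
      proof
        fix j assume j: "j \<in> {0..T}"
        show "j \<in> rk ` C"
        proof (rule ccontr)
          assume nj: "j \<notin> rk ` C"
          define L where "L = {w\<in>C. rk w < j}"
          define U where "U = {w\<in>C. j < rk w}"
          have "rk b \<noteq> j" using nj b by auto
          then have "b \<in> L" using b b0 unfolding L_def by auto
          have "rk t \<noteq> j" using nj t by auto
          then have "t \<in> U" using t tT j unfolding U_def by auto
          have finL: "finite L" "finite U" using finC unfolding L_def U_def by auto
          obtain y where y: "y \<in> L" "\<forall>w\<in>L. rk w \<le> rk y"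
            using ex_max_rk[OF finL(1)] \<open>b \<in> L\<close> by blast
          obtain x where x: "x \<in> U" "\<forall>w\<in>U. rk x \<le> rk w"
            using ex_min_rk[OF finL(2)] \<open>t \<in> U\<close> by blast
          have yC: "y \<in> C" "rk y < j" using y unfolding L_def by auto
          have xC: "x \<in> C" "j < rk x" using x unfolding U_def by auto
          have xy: "m\<^sup>*\<^sup>* x y" using rkC yC xC by auto
          have xP: "x \<in> P" using xC CP by auto
          have "\<exists>z. m\<^sup>*\<^sup>* x z \<and> m\<^sup>*\<^sup>* z y \<and> rk y < rk z \<and> rk z < rk x"
          proof -
            have "x \<noteq> y" using xC yC by auto
            then have "m\<^sup>+\<^sup>+ x y" using xy by (meson rtranclpD)
            then obtain w where w: "m x w" "m\<^sup>*\<^sup>* w y" by (meson tranclpD)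
            have wP: "w \<in> P" using clo xP w by blast
            show ?thesis
            proof (cases "w = y")
              case True
              have "rk y + 2 \<le> rk x" using xC yC by linarith
              then obtain z where z: "m x z" "m\<^sup>+\<^sup>+ z y" using fac xP w True by blast
              have zP: "z \<in> P" using clo xP z by blast
              have zy: "m\<^sup>*\<^sup>* z y" using z(2) by (rule tranclp_into_rtranclp)
              obtain v where v: "m z v" "m\<^sup>*\<^sup>* v y" using z(2) by (meson tranclpD)
              have "rk v < rk z" using dec zP v by blast
              moreover have "rk y \<le> rk v" using path[OF v(2)] clo zP v by blast
              ultimately have "rk y < rk z" by simp
              moreover have "rk z < rk x" using dec xP z by blast
              ultimately show ?thesis using z zy by blast
            next
              case False
              have "rk y < rk w" using path[OF w(2) wP] False by auto
              moreover have "rk w < rk x" using dec xP w by blast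
              ultimately show ?thesis using w by blast
            qed
          qed
          then obtain z where z: "m\<^sup>*\<^sup>* x z" "m\<^sup>*\<^sup>* z y" "rk y < rk z" "rk z < rk x" by blast
          have zP: "z \<in> P" using path[OF z(1) xP] by auto
          have zC: "z \<notin> C"
          proof
            assume zC: "z \<in> C"
            show False
            proof (cases "rk z < j")
              case True then have "z \<in> L" using zC unfolding L_def by auto
              then have "rk z \<le> rk y" using y by blast
              then show False using z by simp
            next
              case False
              then have "rk z \<noteq> j" using nj zC by auto
              with False have "z \<in> U" using zC unfolding U_def by auto
              then have "rk x \<le> rk z" using x by blast
              then show False using z by simp
            qed
          qed
          have "\<forall>w\<in>C. m\<^sup>*\<^sup>* w z \<or> m\<^sup>*\<^sup>* z w"
          proof
            fix w assume w: "w \<in> C"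
            show "m\<^sup>*\<^sup>* w z \<or> m\<^sup>*\<^sup>* z w"
            proof (cases "rk w < j")
              case True
              then have "w \<in> L" using w unfolding L_def by auto
              then have "rk w \<le> rk y" using y by blast
              then have "m\<^sup>*\<^sup>* y w" using rkC w yC by blast
              then have "m\<^sup>*\<^sup>* z w" using z(2) by (meson rtranclp_trans)
              then show ?thesis by blast
            next
              case False
              then have "rk w \<noteq> j" using nj w by auto
              with False have "w \<in> U" using w unfolding U_def by auto
              then have "rk x \<le> rk w" using x by blast
              then have "m\<^sup>*\<^sup>* w x" using rkC w xC by blast
              then have "m\<^sup>*\<^sup>* w z" using z(1) by (meson rtranclp_trans)
              then show ?thesis by blast
            qed
          qed
          then show False using ext zP zC by blast
        qed
      qed
    qed
    have "card C = card (rk ` C)" using inj by (simp add: card_image)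
    also have "\<dots> = T + 1" using img by simp
    finally show ?thesis using finC False by simp
  qed
qed


lemma chain_card:
  assumes vs: "\<forall>i\<ge>1. conj_part be i \<le> conj_part ga i + 1"
    and sat: "saturated_chain_in (arc_diagrams al be ga) C"
  shows "finite C \<and> card C = (if arc_diagrams al be ga = {} then 0 else
     (conj_part al 2 * (conj_part al 2 + (conj_part al 1 - conj_part al 2) - 1)
                 + (conj_part al 1 - conj_part al 2) * conj_part al 2) div 2 + 1)"
proof (rule abs_chain[where m = arc_move and rk = rk])
  show "finite (arc_diagrams al be ga)" by (rule finP)
  show "\<And>x y. x \<in> arc_diagrams al be ga \<Longrightarrow> arc_move x y \<Longrightarrow> y \<in> arc_diagrams al be ga"
    by (rule clo)
  show "\<And>x y. x \<in> arc_diagrams al be ga \<Longrightarrow> arc_move x y \<Longrightarrow> rk y < rk x"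
    using move_rank[OF vs] by blast
  show "\<And>x y. x \<in> arc_diagrams al be ga \<Longrightarrow> arc_move x y \<Longrightarrow> rk y + 2 \<le> rk x \<Longrightarrow> \<exists>z. arc_move x z \<and> arc_move\<^sup>+\<^sup>+ z y"
    using move_rank[OF vs] by blast
  show "\<And>x. x \<in> arc_diagrams al be ga \<Longrightarrow> (\<forall>u\<in>arc_diagrams al be ga. \<not> arc_move u x) \<Longrightarrow> rk x =
     (conj_part al 2 * (conj_part al 2 + (conj_part al 1 - conj_part al 2) - 1)
                 + (conj_part al 1 - conj_part al 2) * conj_part al 2) div 2"
    using top_rk[OF vs] by blast
  show "\<And>x. x \<in> arc_diagrams al be ga \<Longrightarrow> (\<forall>u. \<not> arc_move x u) \<Longrightarrow> rk x = 0"
  proof -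
    fix x assume "x \<in> arc_diagrams al be ga" "\<forall>u. \<not> arc_move x u"
    then have "\<not> 0 < XX x" using bot_ex by blast
    then show "rk x = 0" unfolding rk_def by simp
  qed
  show "C \<subseteq> arc_diagrams al be ga"
    using sat unfolding saturated_chain_in_def is_chain_in_def by blast
  show "\<forall>x\<in>C. \<forall>y\<in>C. arc_move\<^sup>*\<^sup>* y x \<or> arc_move\<^sup>*\<^sup>* x y"
    using sat unfolding saturated_chain_in_def is_chain_in_def arc_le_def by blast
  show "\<not> (\<exists>C'. (C' \<subseteq> arc_diagrams al be ga \<and> (\<forall>x\<in>C'. \<forall>y\<in>C'. arc_move\<^sup>*\<^sup>* y x \<or> arc_move\<^sup>*\<^sup>* x y)) \<and> C \<subset> C')"
    using sat unfolding saturated_chain_in_def is_chain_in_def arc_le_def by blast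
qed

theorem mainTheorem1:
  fixes alpha beta gamma :: "nat list"
  assumes "is_partition alpha" and "is_partition beta" and "is_partition gamma"
    and "\<forall>x\<in>set alpha. x \<le> 2"
    and "\<forall>i\<ge>1. conj_part beta i \<le> conj_part gamma i + 1"
    and "saturated_chain_in (arc_diagrams alpha beta gamma) C1"
    and "saturated_chain_in (arc_diagrams alpha beta gamma) C2"
  shows "finite C1 \<and> finite C2 \<and> card C1 = card C2"
  using chain_card[OF assms(5) assms(6)] chain_card[OF assms(5) assms(7)] by simp

end
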